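(* Let $\hat q,\hat p$ be $n\times n$ parametric matrices and $M$ an $n\times n$ $(\hat q,\hat p)$-Manin matrix over $\mathfrak R$. Let $0\le r\le n$ and let $I=(i_1,\dots,i_r)$ and $K=(k_1,\dots,k_{n-r})$ be multi-indices, each with distinct entries from $\{1,\dots,n\}$. Then $$\varepsilon(\hat p,I\oplus K)\,\mathrm{cdet}_{\hat q}(M)=\sum_{J}\varepsilon(\hat q,J\oplus J^c)\,\mathrm{cdet}_{\hat q}(M_{JI})\,\mathrm{cdet}_{\hat q}(M_{J^c,K}),$$ where the sum is over all increasing multi-indices $J=(j_1<\dots<j_r)$ with entries in $\{1,\dots,n\}$, and $J^c$ is the increasing multi-index formed by the elements of $\{1,\dots,n\}\setminus J$.
   Context: $\mathfrak R$ is an associative unital algebra over $\mathbb C$. A parametric $n\times n$ matrix is a matrix $\hat q=(q_{ij})$ of nonzero complex numbers with $q_{ij}q_{ji}=1$, $q_{ii}=1$. An $n\times m$ matrix $M$ over $\mathfrak R$ is a $(\hat q,\hat p)$-Manin matrix ($\hat q$ $n\times n$, $\hat p$ $m\times m$ parametric) if $M_{ik}M_{jk}=q_{ji}M_{jk}M_{ik}$ for $i<j$ and all $k$, and $M_{ik}M_{jl}-q_{ji}p_{kl}M_{jl}M_{ik}+p_{kl}M_{il}M_{jk}-q_{ji}M_{jk}M_{il}=0$ for $i<j$, $k<l$. For multi-indices $I=(i_1,\dots,i_r)$, $K=(k_1,\dots,k_s)$, $I\oplus K=(i_1,\dots,i_r,k_1,\dots,k_s)$. For a multi-index $I$, $\varepsilon(\hat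 q,I)=0$ if two entries coincide, and otherwise $\varepsilon(\hat q,I)=\prod_{s<t,\ i_s>i_t}(-q_{i_si_t})$. For an increasing $I=(i_1<\dots<i_r)$ and $\sigma\in S_r$, $\varepsilon(\hat q,I,\sigma)=\prod_{s<t,\ \sigma(s)>\sigma(t)}(-q_{i_{\sigma(s)}i_{\sigma(t)}})$. For increasing $I=(i_1<\dots<i_r)$ and any multi-index $J=(j_1,\dots,j_r)$, $\mathrm{cdet}_{\hat q}(M_{IJ})=\sum_{\sigma\in S_r}\varepsilon(\hat q,I,\sigma)M_{i_{\sigma(1)},j_1}\cdots M_{i_{\sigma(r)},j_r}$; $\mathrm{cdet}_{\hat q}(M)$ is the case $I=J=(1,\dots,n)$. *)

theory Defs
  imports Complex_Main "HOL-Combinatorics.Permutations"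
begin

text \<open>An associative unital algebra over the complex numbers: a ring with unit together
  with a unital ring homomorphism from the complex numbers into its centre.\<close>
class complex_algebra_1 = ring_1 +
  fixes of_cplx :: "complex \<Rightarrow> 'a"
  assumes of_cplx_one: "of_cplx 1 = 1"
    and of_cplx_add: "of_cplx (a + b) = of_cplx a + of_cplx b"
    and of_cplx_mult: "of_cplx (a * b) = of_cplx a * of_cplx b"
    and of_cplx_central: "of_cplx a * x = x * of_cplx a"

text \<open>Indices run over 1..n. Matrices are functions of two natural-number indices.\<close>

definition param_matrix :: "nat \<Rightarrow> (nat \<Rightarrow> nat \<Rightarrow> complex) \<Rightarrow> bool" where
  "param_matrix n q \<longleftrightarrow>
     (\<forall>i\<in>{1..n}. \<forall>j\<in>{1..n}. q i j \<noteq> 0 \<and> q i j * q j i = 1) \<and> (\<forall>i\<in>{1..n}. q i i = 1)"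

definition manin ::
  "nat \<Rightarrow> nat \<Rightarrow> (nat \<Rightarrow> nat \<Rightarrow> complex) \<Rightarrow> (nat \<Rightarrow> nat \<Rightarrow> complex)
     \<Rightarrow> (nat \<Rightarrow> nat \<Rightarrow> 'a::complex_algebra_1) \<Rightarrow> bool" where
  "manin n m q p M \<longleftrightarrow>
     (\<forall>i j k. 1 \<le> i \<and> i < j \<and> j \<le> n \<and> 1 \<le> k \<and> k \<le> m \<longrightarrow>
        M i k * M j k = of_cplx (q j i) * (M j k * M i k)) \<and>
     (\<forall>i j k l. 1 \<le> i \<and> i < j \<and> j \<le> n \<and> 1 \<le> k \<and> k < l \<and> l \<le> m \<longrightarrow>
        M i k * M j l - of_cplx (q j i * p k l) * (M j l * M i k)
          + of_cplx (p k l) * (M i l * M j k) - of_cplx (q j i) * (M j k * M i l) = 0)"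

text \<open>\<open>\<epsilon>(q,I)\<close> for a multi-index (list) \<open>I\<close>; positions are 0-based list positions.\<close>
definition eps :: "(nat \<Rightarrow> nat \<Rightarrow> complex) \<Rightarrow> nat list \<Rightarrow> complex" where
  "eps q I = (if distinct I then
      (\<Prod>(s,t)\<in>{(s,t). s < t \<and> t < length I \<and> I!s > I!t}. - q (I!s) (I!t))
    else 0)"

text \<open>\<open>\<epsilon>(q,I,\<sigma>)\<close>, \<open>\<sigma>\<close> a permutation of the positions \<open>{0..<r}\<close>.\<close>
definition eps_perm :: "(nat \<Rightarrow> nat \<Rightarrow> complex) \<Rightarrow> nat list \<Rightarrow> (nat \<Rightarrow> nat) \<Rightarrow> complex" where
  "eps_perm q I \<sigma> =
     (\<Prod>(s,t)\<in>{(s,t). s < t \<and> t < length I \<and> \<sigma> s > \<sigma> t}. - q (I!(\<sigma> s)) (I!(\<sigma> t)))"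

text \<open>Column determinant of the submatrix \<open>M_{IJ}\<close> (rows \<open>I\<close> increasing, columns \<open>J\<close>);
  the product is taken in the given (left-to-right) order.\<close>
definition cdet_sub :: "(nat \<Rightarrow> nat \<Rightarrow> complex) \<Rightarrow> nat list \<Rightarrow> nat list
     \<Rightarrow> (nat \<Rightarrow> nat \<Rightarrow> 'a::complex_algebra_1) \<Rightarrow> 'a" where
  "cdet_sub q I J M = (\<Sum>\<sigma> | \<sigma> permutes {..<length I}.
      of_cplx (eps_perm q I \<sigma>) * prod_list (map (\<lambda>s. M (I!(\<sigma> s)) (J!s)) [0..<length J]))"

definition cdet :: "nat \<Rightarrow> (nat \<Rightarrow> nat \<Rightarrow> complex) \<Rightarrow> (nat \<Rightarrow> nat \<Rightarrow> 'a::complex_algebra_1) \<Rightarrow> 'a" where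
  "cdet n q M = cdet_sub q [1..<n+1] [1..<n+1] M"

definition incr_idx :: "nat \<Rightarrow> nat \<Rightarrow> nat list set" where
  "incr_idx n r = {J. sorted_wrt (<) J \<and> set J \<subseteq> {1..n} \<and> length J = r}"

definition compl_idx :: "nat \<Rightarrow> nat list \<Rightarrow> nat list" where
  "compl_idx n J = filter (\<lambda>x. x \<notin> set J) [1..<n+1]"

end

theory Submission
  imports Defs "HOL-Combinatorics.Multiset_Permutations"
begin

lemma of_cplx_0: "of_cplx 0 = (0::'a::complex_algebra_1)"
proof -
  have "of_cplx (0+0) = (of_cplx 0::'a) + of_cplx 0" by (rule of_cplx_add)
  then show ?thesis by simp
qed

lemma of_cplx_minus: "of_cplx (- a) = - (of_cplx a::'a::complex_algebra_1)"
proof -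
  have "of_cplx (a + - a) = (of_cplx a::'a) + of_cplx (- a)" by (rule of_cplx_add)
  then show ?thesis by (simp add: of_cplx_0 eq_neg_iff_add_eq_0 add.commute)
qed

lemma of_cplx_lc: "(x::'a::complex_algebra_1) * (of_cplx a * y) = of_cplx a * (x * y)"
  by (metis mult.assoc of_cplx_central)

definition ordrel :: "nat list \<Rightarrow> (nat \<times> nat) set" where
  "ordrel R = {(R!s, R!t) | s t. s < t \<and> t < length R}"

lemma ordrel_Nil[simp]: "ordrel [] = {}"
  by (simp add: ordrel_def)

lemma ordrel_Cons[simp]: "ordrel (x#R) = {x} \<times> set R \<union> ordrel R"
proof (intro equalityI subsetI)
  fix p assume "p \<in> ordrel (x#R)"
  then obtain s t where p: "p = ((x#R)!s, (x#R)!t)" "s < t" "t < length (x#R)"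
    unfolding ordrel_def by blast
  show "p \<in> {x} \<times> set R \<union> ordrel R"
  proof (cases s)
    case 0
    then obtain t' where "t = Suc t'" using p by (cases t) auto
    then show ?thesis using p 0 by auto
  next
    case (Suc s')
    then obtain t' where t': "t = Suc t'" using p by (cases t) auto
    then have "p = (R!s', R!t')" "s' < t'" "t' < length R" using p Suc by auto
    then show ?thesis unfolding ordrel_def by blast
  qed
next
  fix p assume "p \<in> {x} \<times> set R \<union> ordrel R"
  then show "p \<in> ordrel (x#R)"
  proof
    assume "p \<in> {x} \<times> set R"
    then obtain j where "p = (x, R!j)" "j < length R" by (auto simp: in_set_conv_nth)
    then have "p = ((x#R)!0, (x#R)!(Suc j))" "0 < Suc j" "Suc j < length (x#R)" by auto
    then show ?thesis unfolding ordrel_def by blast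
  next
    assume "p \<in> ordrel R"
    then obtain s t where "p = (R!s, R!t)" "s < t" "t < length R" unfolding ordrel_def by blast
    then have "p = ((x#R)!Suc s, (x#R)!(Suc t))" "Suc s < Suc t" "Suc t < length (x#R)" by auto
    then show ?thesis unfolding ordrel_def by blast
  qed
qed

lemma ordrel_append: "ordrel (A @ B) = ordrel A \<union> ordrel B \<union> set A \<times> set B"
  by (induction A) auto

lemma ordrel_subset: "ordrel R \<subseteq> set R \<times> set R"
  by (induction R) auto

lemma finite_ordrel[simp]: "finite (ordrel R)"
  by (rule finite_subset[OF ordrel_subset]) auto

definition eps' :: "(nat \<Rightarrow> nat \<Rightarrow> complex) \<Rightarrow> nat list \<Rightarrow> complex" where
  "eps' q R = (\<Prod>(x,y)\<in>{(x,y)\<in>ordrel R. y < x}. - q x y)"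

definition cross :: "(nat \<Rightarrow> nat \<Rightarrow> complex) \<Rightarrow> nat set \<Rightarrow> nat set \<Rightarrow> complex" where
  "cross q X Y = (\<Prod>(x,y)\<in>{(x,y)\<in>X \<times> Y. y < x}. - q x y)"

lemma eps_eq_eps':
  assumes "distinct R" shows "eps q R = eps' q R"
proof -
  let ?P = "{(s,t). s < t \<and> t < length R \<and> R!s > R!t}"
  let ?V = "{(x,y)\<in>ordrel R. y < x}"
  let ?h = "\<lambda>(s,t). (R!s, R!t)"
  have bij: "bij_betw ?h ?P ?V"
  proof (rule bij_betw_imageI)
    show "inj_on ?h ?P"
      using assms by (auto simp: inj_on_def nth_eq_iff_index_eq)
    show "?h ` ?P = ?V"
      unfolding ordrel_def by auto
  qed
  have "eps q R = (\<Prod>(s,t)\<in>?P. - q (R!s) (R!t))"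
    using assms by (simp add: eps_def)
  also have "\<dots> = (\<Prod>p\<in>?P. (\<lambda>(x,y). - q x y) (?h p))"
    by (rule prod.cong) auto
  also have "\<dots> = (\<Prod>(x,y)\<in>?V. - q x y)"
    by (rule prod.reindex_bij_betw[OF bij])
  also have "\<dots> = eps' q R" by (simp add: eps'_def)
  finally show ?thesis .
qed

lemma eps'_sorted: "sorted_wrt (<) R \<Longrightarrow> eps' q R = 1"
proof -
  assume "sorted_wrt (<) R"
  then have e: "{(x,y)\<in>ordrel R. y < x} = {}"
    by (induction R) auto
  show ?thesis unfolding eps'_def e by simp
qed

lemma eps'_append:
  assumes "distinct (A @ B)"
  shows "eps' q (A @ B) = eps' q A * eps' q B * cross q (set A) (set B)"
proof -
  let ?g = "\<lambda>(x,y). - q x y"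
  have dj: "set A \<inter> set B = {}" using assms by auto
  have e: "{(x,y)\<in>ordrel (A@B). y < x} =
      ({(x,y)\<in>ordrel A. y < x} \<union> {(x,y)\<in>ordrel B. y < x}) \<union> {(x,y)\<in>set A \<times> set B. y < x}"
    by (auto simp: ordrel_append)
  have d1: "{(x,y)\<in>ordrel A. y < x} \<inter> {(x,y)\<in>ordrel B. y < x} = {}"
    using dj ordrel_subset[of A] ordrel_subset[of B] by blast
  have d2: "({(x,y)\<in>ordrel A. y < x} \<union> {(x,y)\<in>ordrel B. y < x}) \<inter> {(x,y)\<in>set A \<times> set B. y < x} = {}"
    using dj ordrel_subset[of A] ordrel_subset[of B] by blast
  have f1: "finite {(x,y)\<in>ordrel A. y < x}" "finite {(x,y)\<in>ordrel B. y < x}"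
    "finite {(x,y)\<in>set A \<times> set B. y < x}"
    by (auto intro: finite_subset[of _ "ordrel A"] finite_subset[of _ "ordrel B"] finite_subset[of _ "set A \<times> set B"])
  let ?X = "{(x,y)\<in>ordrel A. y < x}" and ?Y = "{(x,y)\<in>ordrel B. y < x}"
    and ?Z = "{(x,y)\<in>set A \<times> set B. y < x}"
  have "prod ?g (?X \<union> ?Y \<union> ?Z) = prod ?g (?X \<union> ?Y) * prod ?g ?Z"
    by (rule prod.union_disjoint) (use f1 d2 in auto)
  also have "prod ?g (?X \<union> ?Y) = prod ?g ?X * prod ?g ?Y"
    by (rule prod.union_disjoint) (use f1 d1 in auto)
  finally show ?thesis
    unfolding eps'_def cross_def e .
qed

lemma eps'_single[simp]: "eps' q [x] = 1"
  by (simp add: eps'_def)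

lemma eps'_Cons:
  assumes "distinct (x # R)"
  shows "eps' q (x # R) = cross q {x} (set R) * eps' q R"
  using eps'_append[of "[x]" R q] assms by simp

lemma cross_insert_less:
  assumes "a < b" "a \<notin> Y"
  shows "cross q {b} (insert a Y) = - q b a * cross q {b} Y"
proof -
  have e: "{(x,y)\<in>{b} \<times> insert a Y. y < x} = insert (b,a) {(x,y)\<in>{b} \<times> Y. y < x}"
    using assms by auto
  have "finite {(x,y)\<in>{b} \<times> Y. y < x}"
    by (rule finite_subset[of _ "{b} \<times> {..<b}"]) auto
  then show ?thesis unfolding cross_def e using assms by (subst prod.insert) auto
qed

lemma cross_insert_greater:
  assumes "a < b"
  shows "cross q {a} (insert b Y) = cross q {a} Y"
proof -
  have e: "{(x,y)\<in>{a} \<times> insert b Y. y < x} = {(x,y)\<in>{a} \<times> Y. y < x}"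
    using assms by auto
  show ?thesis unfolding cross_def e ..
qed

lemma eps'_swap:
  assumes "distinct (A @ a # b # B)" "a < b"
  shows "eps' q (A @ b # a # B) = - q b a * eps' q (A @ a # b # B)"
proof -
  have d2: "distinct (A @ b # a # B)" using assms by auto
  have s: "set (b # a # B) = set (a # b # B)" by auto
  have 1: "eps' q (b # a # B) = - q b a * eps' q (a # b # B)"
    using assms
    by (simp add: eps'_Cons cross_insert_less cross_insert_greater)
  show ?thesis
    using assms d2
    by (simp add: eps'_append 1 insert_commute del: eps'_Cons)
qed

definition T :: "(nat \<Rightarrow> nat \<Rightarrow> 'a::complex_algebra_1) \<Rightarrow> nat list \<Rightarrow> nat list \<Rightarrow> 'a" where
  "T M R L = prod_list (map (\<lambda>(i,k). M i k) (zip R L))"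

lemma T_Cons[simp]: "T M (i # R) (k # L) = M i k * T M R L"
  by (simp add: T_def)

lemma T_append: "length R1 = length L1 \<Longrightarrow> T M (R1 @ R2) (L1 @ L2) = T M R1 L1 * T M R2 L2"
  by (simp add: T_def zip_append)

definition F :: "(nat \<Rightarrow> nat \<Rightarrow> complex) \<Rightarrow> (nat \<Rightarrow> nat \<Rightarrow> 'a::complex_algebra_1) \<Rightarrow> nat list \<Rightarrow> nat set \<Rightarrow> 'a" where
  "F q M L S = (\<Sum>R\<in>permutations_of_set S. of_cplx (eps q R) * T M R L)"

lemma zip_as_map: "length R = length L \<Longrightarrow> zip R L = map (\<lambda>s. (R!s, L!s)) [0..<length L]"
  by (rule nth_equalityI) auto

lemma sorted_less_nth_iff:
  fixes J :: "nat list"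
  assumes "sorted_wrt (<) J" "i < length J" "j < length J"
  shows "J!i < J!j \<longleftrightarrow> i < j"
proof (cases i j rule: linorder_cases)
  case less
  then show ?thesis using sorted_wrt_nth_less[OF assms(1), of i j] assms by simp
next
  case equal
  then show ?thesis by (simp add: order_less_irrefl)
next
  case greater
  then have "J!j < J!i" using sorted_wrt_nth_less[OF assms(1), of j i] assms by simp
  then show ?thesis using greater by simp
qed

lemma cdet_sub_eq:
  fixes M :: "nat \<Rightarrow> nat \<Rightarrow> 'a::complex_algebra_1"
  assumes sJ: "sorted_wrt (<) J" and len: "length L = length J"
  shows "cdet_sub q J L M = F q M L (set J)"
proof -
  define m where "m = length J"
  have dJ: "distinct J" using sJ by (simp add: strict_sorted_iff distinct_map)
  define h where "h = (\<lambda>\<sigma>. map (\<lambda>s. J!(\<sigma> s)) [0..<m])"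
  let ?P = "{\<sigma>. \<sigma> permutes {..<m}}"
  let ?g = "\<lambda>R. of_cplx (eps q R) * T M R L"
  have lt: "\<sigma> s < m" if "\<sigma> permutes {..<m}" "s < m" for \<sigma> s
    using permutes_in_image[OF that(1)] that(2) by auto
  have inj: "inj_on h ?P"
  proof (rule inj_onI)
    fix \<sigma> \<tau> assume s: "\<sigma> \<in> ?P" and t: "\<tau> \<in> ?P" and e: "h \<sigma> = h \<tau>"
    show "\<sigma> = \<tau>"
    proof
      fix s show "\<sigma> s = \<tau> s"
      proof (cases "s < m")
        case True
        then have "h \<sigma> ! s = h \<tau> ! s" using e by simp
        then have "J!(\<sigma> s) = J!(\<tau> s)" using True by (simp add: h_def)
        then show ?thesis using dJ lt[of \<sigma> s] lt[of \<tau> s] s t True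
          by (simp add: nth_eq_iff_index_eq m_def)
      next
        case False
        then show ?thesis using permutes_not_in[of \<sigma> "{..<m}" s] permutes_not_in[of \<tau> "{..<m}" s] s t
          by auto
      qed
    qed
  qed
  have sub: "h ` ?P \<subseteq> permutations_of_set (set J)"
  proof
    fix R assume "R \<in> h ` ?P"
    then obtain \<sigma> where s: "\<sigma> permutes {..<m}" and R: "R = h \<sigma>" by auto
    have "inj_on (\<lambda>s. J!(\<sigma> s)) {0..<m}"
      using dJ lt[OF s] permutes_inj_on[OF s]
      by (auto simp: inj_on_def nth_eq_iff_index_eq m_def)
    then have "distinct R" by (simp add: R h_def distinct_map)
    moreover have "set R = set J"
    proof -
      have "set R = (\<lambda>s. J!s) ` (\<sigma> ` {..<m})" by (auto simp: R h_def)
      also have "\<sigma> ` {..<m} = {..<m}" by (rule permutes_image[OF s])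
      finally show ?thesis by (auto simp: m_def in_set_conv_nth)
    qed
    ultimately show "R \<in> permutations_of_set (set J)" by auto
  qed
  have fin: "finite ?P" by (rule finite_permutations) simp
  have "card (h ` ?P) = card (permutations_of_set (set J))"
    using card_image[OF inj] card_permutations[of "{..<m}" m] dJ
    by (simp add: distinct_card m_def)
  then have img: "h ` ?P = permutations_of_set (set J)"
    by (intro card_subset_eq sub) auto
  have "cdet_sub q J L M = (\<Sum>\<sigma>\<in>?P. ?g (h \<sigma>))"
    unfolding cdet_sub_def
  proof (rule sum.cong)
    fix \<sigma> assume s: "\<sigma> \<in> ?P"
    then have s': "\<sigma> permutes {..<m}" by simp
    have dR: "distinct (h \<sigma>)" using sub s by (auto dest: permutations_of_setD)
    have "eps q (h \<sigma>) = (\<Prod>(s,t)\<in>{(s,t). s < t \<and> t < m \<and> J!(\<sigma> s) > J!(\<sigma> t)}. - q (J!(\<sigma> s)) (J!(\<sigma> t)))"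
      unfolding eps_def if_P[OF dR] by (intro prod.cong) (auto simp: h_def)
    also have "{(s,t). s < t \<and> t < m \<and> J!(\<sigma> s) > J!(\<sigma> t)} = {(s,t). s < t \<and> t < length J \<and> \<sigma> s > \<sigma> t}"
      using sorted_less_nth_iff[OF sJ] lt[OF s'] by (auto simp: m_def)
    finally have e1: "eps q (h \<sigma>) = eps_perm q J \<sigma>" by (simp add: eps_perm_def m_def)
    have len_h: "length (h \<sigma>) = length L" using len by (simp add: h_def m_def)
    have e2: "T M (h \<sigma>) L = prod_list (map (\<lambda>s. M (J!(\<sigma> s)) (L!s)) [0..<length L])"
      unfolding T_def zip_as_map[OF len_h] map_map using len
      by (intro arg_cong[where f=prod_list] map_cong) (auto simp: h_def m_def)
    show "of_cplx (eps_perm q J \<sigma>) * prod_list (map (\<lambda>s. M (J!(\<sigma> s)) (L!s)) [0..<length L]) = ?g (h \<sigma>)"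
      using e1 e2 by simp
  qed (simp add: m_def)
  also have "\<dots> = (\<Sum>R\<in>h ` ?P. ?g R)"
    by (rule sum.reindex[OF inj, symmetric, unfolded comp_def])
  also have "\<dots> = F q M L (set J)" by (simp add: img F_def)
  finally show ?thesis .
qed

definition sw :: "nat \<Rightarrow> nat list \<Rightarrow> nat list" where
  "sw s R = take s R @ R!Suc s # R!s # drop (Suc (Suc s)) R"

lemma decomp4: "Suc s < length R \<Longrightarrow> R = take s R @ R!s # R!Suc s # drop (Suc (Suc s)) R"
  by (simp add: Cons_nth_drop_Suc)

lemma decomp4_ex: "Suc s < length R \<Longrightarrow> \<exists>X a b Y. R = X @ a # b # Y \<and> length X = s"
  by (rule exI[of _ "take s R"], rule exI[of _ "R!s"], rule exI[of _ "R!Suc s"],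
      rule exI[of _ "drop (Suc (Suc s)) R"]) (simp add: decomp4[symmetric])

lemma sw_app[simp]: "length X = s \<Longrightarrow> sw s (X @ a # b # Y) = X @ b # a # Y"
  by (simp add: sw_def nth_append)

lemma sum_pair:
  fixes g :: "nat list \<Rightarrow> 'b::comm_monoid_add"
  assumes "Suc s < card S"
  shows "(\<Sum>R\<in>permutations_of_set S. g R) =
     (\<Sum>R\<in>{R\<in>permutations_of_set S. R!s < R!Suc s}. g R + g (sw s R))"
proof -
  let ?A = "{R\<in>permutations_of_set S. R!s < R!Suc s}"
  let ?B = "{R\<in>permutations_of_set S. R!Suc s < R!s}"
  have fin: "finite S" using assms card.infinite by fastforce
  have len: "length R = card S" if "R \<in> permutations_of_set S" for R
    using length_finite_permutations_of_set[OF that] .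
  have dec: "\<exists>X a b Y. R = X @ a # b # Y \<and> length X = s" if "R \<in> permutations_of_set S" for R
    using decomp4_ex[of s R] len[OF that] assms by simp
  have sw_mem: "sw s R \<in> permutations_of_set S \<and> sw s (sw s R) = R \<and> (sw s R)!s = R!Suc s \<and> (sw s R)!Suc s = R!s \<and> R!s \<noteq> R!Suc s"
    if RS: "R \<in> permutations_of_set S" for R
  proof -
    obtain X a b Y where e: "R = X @ a # b # Y" "s = length X" using dec[OF RS] by metis
    have "distinct R" "set R = S" using RS by (auto dest: permutations_of_setD)
    then have d: "distinct (X @ b # a # Y)" "set (X @ b # a # Y) = S" "a \<noteq> b" using e by auto
    have sw1: "sw s R = X @ b # a # Y" using e by simp
    have sw2: "sw s (X @ b # a # Y) = R" using e by simp
    have n1: "(X @ b # a # Y) ! s = b" "(X @ b # a # Y) ! Suc s = a"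
      "R!s = a" "R ! Suc s = b" using e by (simp_all add: nth_append)
    show ?thesis unfolding sw1 sw2 n1 using d by (simp add: permutations_of_setI)
  qed
  have un: "permutations_of_set S = ?A \<union> ?B"
  proof (intro equalityI subsetI)
    fix R assume R: "R \<in> permutations_of_set S"
    then have "R!s \<noteq> R!Suc s" using sw_mem by blast
    then show "R \<in> ?A \<union> ?B" using R by (simp add: neq_iff)
  qed blast
  have dj: "?A \<inter> ?B = {}" by auto
  have "(\<Sum>R\<in>?B. g R) = (\<Sum>R\<in>?A. g (sw s R))"
  proof (rule sum.reindex_bij_witness[of _ "sw s" "sw s"])
    fix R assume R: "R \<in> ?B"
    then have "R \<in> permutations_of_set S" by blast
    note h = sw_mem[OF this]
    show "sw s (sw s R) = R" using h by blast
    show "sw s R \<in> ?A" using h R by simp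
    show "g (sw s (sw s R)) = g R" using h by simp
  next
    fix R assume R: "R \<in> ?A"
    then have "R \<in> permutations_of_set S" by blast
    note h = sw_mem[OF this]
    show "sw s (sw s R) = R" using h by blast
    show "sw s R \<in> ?B" using h R by simp
  qed
  moreover have "(\<Sum>R\<in>permutations_of_set S. g R) = (\<Sum>R\<in>?A. g R) + (\<Sum>R\<in>?B. g R)"
  proof -
    have "(\<Sum>R\<in>permutations_of_set S. g R) = (\<Sum>R\<in>?A \<union> ?B. g R)"
      using un by (rule arg_cong)
    also have "\<dots> = (\<Sum>R\<in>?A. g R) + (\<Sum>R\<in>?B. g R)"
      by (rule sum.union_disjoint) (use fin dj in auto)
    finally show ?thesis .
  qed
  ultimately show ?thesis by (simp add: sum.distrib)
qed



lemma scal_out: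
  "(E::'a::complex_algebra_1) * (P * ((of_cplx c * Z) * Q)) = of_cplx c * (E * (P * (Z * Q)))"
proof -
  have "P * ((of_cplx c * Z) * Q) = P * (of_cplx c * (Z * Q))" by (simp only: mult.assoc)
  also have "\<dots> = of_cplx c * (P * (Z * Q))" by (rule of_cplx_lc)
  finally have "E * (P * ((of_cplx c * Z) * Q)) = E * (of_cplx c * (P * (Z * Q)))" by simp
  also have "\<dots> = of_cplx c * (E * (P * (Z * Q)))" by (rule of_cplx_lc)
  finally show ?thesis .
qed

lemma pair_alg:
  "of_cplx e * (P * (x1 * (x2 * Q))) + of_cplx (- c * e) * (P * (y1 * (y2 * Q))) =
   of_cplx e * (P * ((x1 * x2 - of_cplx c * (y1 * y2)) * (Q::'a::complex_algebra_1)))"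
proof -
  have 1: "of_cplx (- c * e) * (P * (y1 * (y2 * Q))) = - (of_cplx e * (P * ((of_cplx c * (y1 * y2)) * Q)))"
  proof -
    have "of_cplx (- c * e) * (P * (y1 * (y2 * Q))) = - (of_cplx c * (of_cplx e * (P * (y1 * (y2 * Q)))))"
      by (simp only: minus_mult_left of_cplx_minus of_cplx_mult mult.assoc)
    also have "\<dots> = - (of_cplx e * (P * ((of_cplx c * (y1 * y2)) * Q)))"
      using scal_out[of "of_cplx e" P c "y1 * y2" Q] by (simp only: mult.assoc)
    finally show ?thesis .
  qed
  show ?thesis unfolding 1 by (simp only: distrib_left distrib_right mult_minus_left mult_minus_right mult.assoc diff_conv_add_uminus)
qed

definition Dm :: "(nat \<Rightarrow> nat \<Rightarrow> 'a::complex_algebra_1) \<Rightarrow> (nat \<Rightarrow> nat \<Rightarrow> complex) \<Rightarrow> nat \<Rightarrow> nat \<Rightarrow> nat \<Rightarrow> nat \<Rightarrow> 'a" where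
  "Dm M q a b k l = M a k * M b l - of_cplx (q b a) * (M b k * M a l)"

lemma Dm_same:
  assumes "manin n n q p M" "1 \<le> a" "a < b" "b \<le> n" "1 \<le> k" "k \<le> n"
  shows "Dm M q a b k k = 0"
proof -
  have "M a k * M b k = of_cplx (q b a) * (M b k * M a k)"
    using assms unfolding manin_def by blast
  then show ?thesis unfolding Dm_def by simp
qed

lemma Dm_lt:
  assumes "manin n n q p M" "1 \<le> a" "a < b" "b \<le> n" "1 \<le> k" "k < l" "l \<le> n"
  shows "Dm M q a b k l = - of_cplx (p k l) * Dm M q a b l k"
proof -
  have e: "M a k * M b l - of_cplx (q b a * p k l) * (M b l * M a k)
          + of_cplx (p k l) * (M a l * M b k) - of_cplx (q b a) * (M b k * M a l) = 0"
    using assms unfolding manin_def by blast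
  have c: "of_cplx (q b a * p k l) * X = of_cplx (p k l) * (of_cplx (q b a) * X)" for X :: 'a
    by (simp only: mult.commute[of "q b a"] of_cplx_mult mult.assoc)
  show ?thesis using e unfolding Dm_def c
    by (simp add: algebra_simps)
qed

lemma Dm_swap:
  assumes "manin n n q p M" "param_matrix n p" "1 \<le> a" "a < b" "b \<le> n"
     "1 \<le> k" "k \<le> n" "1 \<le> l" "l \<le> n" "k \<noteq> l"
  shows "Dm M q a b k l = - of_cplx (p k l) * Dm M q a b l k"
proof (cases "k < l")
  case True
  then show ?thesis using Dm_lt[OF assms(1,3,4,5,6) True assms(9)] by simp
next
  case False
  then have lk: "l < k" using assms by simp
  have pp: "p k l * p l k = 1" using assms(2,6-9) unfolding param_matrix_def by auto
  have "Dm M q a b l k = - of_cplx (p l k) * Dm M q a b k l"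
    using Dm_lt[OF assms(1,3,4,5,8) lk assms(7)] .
  then have "- of_cplx (p k l) * Dm M q a b l k = of_cplx (p k l * p l k) * Dm M q a b k l"
    by (simp add: of_cplx_mult mult.assoc)
  then show ?thesis using pp by (simp add: of_cplx_one)
qed

lemma F_swap:
  fixes M :: "nat \<Rightarrow> nat \<Rightarrow> 'a::complex_algebra_1"
  assumes Mn: "manin n n q p M" and pp: "param_matrix n p"
    and S: "S \<subseteq> {1..n}" and len: "length (A @ k # l # B) = card S"
    and k: "k \<in> {1..n}" and l: "l \<in> {1..n}"
  shows "F q M (A @ k # l # B) S = (if k = l then 0 else of_cplx (- p k l) * F q M (A @ l # k # B) S)"
proof -
  define s where "s = length A"
  have sc: "Suc s < card S" using len by (simp add: s_def)
  let ?PA = "{R\<in>permutations_of_set S. R!s < R!Suc s}"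
  let ?G = "\<lambda>L R. of_cplx (eps q R) * T M R L"
  have key: "?G (A @ k # l # B) R + ?G (A @ k # l # B) (sw s R) =
     of_cplx (eps q R) * (T M (take s R) A * (Dm M q (R!s) (R!Suc s) k l * T M (drop (Suc (Suc s)) R) B))"
    if R: "R \<in> ?PA" for R k l
  proof -
    have lenR: "length R = card S" using R by (auto intro: length_finite_permutations_of_set)
    define X where "X = take s R"
    define a where "a = R!s"
    define b where "b = R!Suc s"
    define Y where "Y = drop (Suc (Suc s)) R"
    have Re: "R = X @ a # b # Y" unfolding X_def a_def b_def Y_def
      using sc lenR by (intro decomp4) simp
    have lX: "length X = length A" using sc lenR by (simp add: X_def s_def)
    have ab: "a < b" using R by (simp add: a_def b_def)
    have dR: "distinct R" using R by (auto dest: permutations_of_setD)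
    have swR: "sw s R = X @ b # a # Y" using Re lX by (simp add: s_def)
    have e1: "eps q (X @ b # a # Y) = - q b a * eps q R"
      using dR unfolding Re using ab by (simp add: eps_eq_eps' eps'_swap del: eps'_Cons)
    have "?G (A @ k # l # B) R + ?G (A @ k # l # B) (sw s R) =
        of_cplx (eps q R) * (T M X A * (M a k * (M b l * T M Y B))) +
        of_cplx (- q b a * eps q R) * (T M X A * (M b k * (M a l * T M Y B)))"
    proof -
      have t1: "T M R (A @ k # l # B) = T M X A * (M a k * (M b l * T M Y B))"
        unfolding Re by (simp add: T_append lX)
      have t2: "T M (X @ b # a # Y) (A @ k # l # B) = T M X A * (M b k * (M a l * T M Y B))"
        by (simp add: T_append lX)
      show ?thesis unfolding swR e1 t1 t2 ..
    qed
    also have "\<dots> = of_cplx (eps q R) * (T M X A * (Dm M q a b k l * T M Y B))"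
      unfolding pair_alg Dm_def ..
    finally show ?thesis by (simp add: X_def Y_def a_def b_def)
  qed
  have rng: "1 \<le> R!s \<and> R!s < R!Suc s \<and> R!Suc s \<le> n" if R: "R \<in> ?PA" for R
  proof -
    have lenR: "length R = card S" using R by (auto intro: length_finite_permutations_of_set)
    have "set R = S" using R by (auto dest: permutations_of_setD)
    moreover have "R!s \<in> set R" "R!Suc s \<in> set R" using lenR sc by (simp_all add: nth_mem)
    ultimately have "R!s \<in> S" "R!Suc s \<in> S" by simp_all
    then show ?thesis using S R by auto
  qed
  have F1: "F q M (A @ k # l # B) S = (\<Sum>R\<in>?PA. ?G (A @ k # l # B) R + ?G (A @ k # l # B) (sw s R))"
    unfolding F_def by (rule sum_pair[OF sc])
  have F2: "F q M (A @ l # k # B) S = (\<Sum>R\<in>?PA. ?G (A @ l # k # B) R + ?G (A @ l # k # B) (sw s R))"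
    unfolding F_def by (rule sum_pair[OF sc])
  show ?thesis
  proof (cases "k = l")
    case True
    have "F q M (A @ k # l # B) S = 0"
      unfolding F1
    proof (rule sum.neutral, rule ballI)
      fix R assume R: "R \<in> ?PA"
      have "Dm M q (R!s) (R!Suc s) k l = 0"
        using Dm_same[OF Mn, of "R!s" "R!Suc s" k] rng[OF R] k True by auto
      then show "?G (A @ k # l # B) R + ?G (A @ k # l # B) (sw s R) = 0"
        unfolding key[OF R] by simp
    qed
    then show ?thesis using True by simp
  next
    case False
    have "F q M (A @ k # l # B) S = (\<Sum>R\<in>?PA. of_cplx (- p k l) * (?G (A @ l # k # B) R + ?G (A @ l # k # B) (sw s R)))"
      unfolding F1
    proof (rule sum.cong[OF refl])
      fix R assume R: "R \<in> ?PA"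
      have D: "Dm M q (R!s) (R!Suc s) k l = of_cplx (- p k l) * Dm M q (R!s) (R!Suc s) l k"
        using Dm_swap[OF Mn pp, of "R!s" "R!Suc s" k l] rng[OF R] k l False
        by (simp add: of_cplx_minus)
      show "?G (A @ k # l # B) R + ?G (A @ k # l # B) (sw s R) =
          of_cplx (- p k l) * (?G (A @ l # k # B) R + ?G (A @ l # k # B) (sw s R))"
        unfolding key[OF R] D scal_out ..
    qed
    also have "\<dots> = of_cplx (- p k l) * F q M (A @ l # k # B) S"
      unfolding F2 by (simp add: sum_distrib_left)
    finally show ?thesis using False by simp
  qed
qed

lemma cross_one: "\<forall>y\<in>Y. x < y \<Longrightarrow> cross q {x} Y = 1"
proof -
  assume "\<forall>y\<in>Y. x < y"
  then have e: "{(a,b)\<in>{x} \<times> Y. b < a} = {}" by auto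
  show ?thesis unfolding cross_def e by simp
qed

lemma F_dup_aux:
  fixes M :: "nat \<Rightarrow> nat \<Rightarrow> 'a::complex_algebra_1"
  assumes Mn: "manin n n q p M" and pp: "param_matrix n p" and S: "S \<subseteq> {1..n}"
  shows "set (A @ x # B @ x # C) \<subseteq> {1..n} \<Longrightarrow> length (A @ x # B @ x # C) = card S \<Longrightarrow>
         F q M (A @ x # B @ x # C) S = 0"
proof (induction B arbitrary: A)
  case Nil
  then show ?case using F_swap[OF Mn pp S, of A x x C] by simp
next
  case (Cons b B)
  have "F q M (A @ x # b # (B @ x # C)) S =
     (if x = b then 0 else of_cplx (- p x b) * F q M (A @ b # x # (B @ x # C)) S)"
    by (rule F_swap[OF Mn pp S]) (use Cons.prems in auto)
  also have "F q M (A @ b # x # (B @ x # C)) S = F q M ((A @ [b]) @ x # B @ x # C) S" by simp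
  also have "\<dots> = 0" by (rule Cons.IH) (use Cons.prems in auto)
  finally show ?case by simp
qed

lemma F_dup:
  fixes M :: "nat \<Rightarrow> nat \<Rightarrow> 'a::complex_algebra_1"
  assumes Mn: "manin n n q p M" and pp: "param_matrix n p" and S: "S \<subseteq> {1..n}"
    and "\<not> distinct L" "set L \<subseteq> {1..n}" "length L = card S"
  shows "F q M L S = 0"
proof -
  obtain A x B C where "L = A @ [x] @ B @ [x] @ C" using not_distinct_decomp[OF assms(4)] by blast
  then show ?thesis using F_dup_aux[OF Mn pp S, of A x B C] assms(5,6) by simp
qed

lemma F_insort:
  fixes M :: "nat \<Rightarrow> nat \<Rightarrow> 'a::complex_algebra_1"
  assumes Mn: "manin n n q p M" and pp: "param_matrix n p" and S: "S \<subseteq> {1..n}"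
  shows "sorted_wrt (<) Y \<Longrightarrow> x \<notin> set Y \<Longrightarrow> set (A @ x # Y) \<subseteq> {1..n} \<Longrightarrow>
    length (A @ x # Y) = card S \<Longrightarrow>
    F q M (A @ x # Y) S = of_cplx (cross p {x} (set Y)) * F q M (A @ insort x Y) S"
proof (induction Y arbitrary: A)
  case Nil
  have "cross p {x} {} = 1" by (simp add: cross_def)
  then show ?case by (simp add: of_cplx_one)
next
  case (Cons y Y)
  show ?case
  proof (cases "x < y")
    case True
    then have "\<forall>z\<in>set (y # Y). x < z" using Cons.prems(1) by auto
    then have "cross p {x} (set (y # Y)) = 1" by (rule cross_one)
    then show ?thesis using True by (simp add: of_cplx_one)
  next
    case False
    then have yx: "y < x" using Cons.prems(2) by auto
    have sw: "F q M (A @ x # y # Y) S = (if x = y then 0 else of_cplx (- p x y) * F q M (A @ y # x # Y) S)"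
      by (rule F_swap[OF Mn pp S]) (use Cons.prems in auto)
    have 1: "F q M (A @ x # y # Y) S = of_cplx (- p x y) * F q M (A @ y # x # Y) S"
      using sw yx by simp
    have 2: "F q M ((A @ [y]) @ x # Y) S = of_cplx (cross p {x} (set Y)) * F q M ((A @ [y]) @ insort x Y) S"
      by (rule Cons.IH) (use Cons.prems in auto)
    have 4: "F q M (A @ y # x # Y) S = of_cplx (cross p {x} (set Y)) * F q M (A @ insort x (y # Y)) S"
      using 2 yx by simp
    have 3: "cross p {x} (set (y # Y)) = - p x y * cross p {x} (set Y)"
    proof -
      have "y \<notin> set Y" using Cons.prems(1) by auto
      then show ?thesis using cross_insert_less[of y x "set Y" p] yx by simp
    qed
    show ?thesis by (simp only: 1 4 3 of_cplx_mult mult.assoc)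
  qed
qed

lemma F_sort:
  fixes M :: "nat \<Rightarrow> nat \<Rightarrow> 'a::complex_algebra_1"
  assumes Mn: "manin n n q p M" and pp: "param_matrix n p" and S: "S \<subseteq> {1..n}"
  shows "distinct L \<Longrightarrow> set (A @ L) \<subseteq> {1..n} \<Longrightarrow> length (A @ L) = card S \<Longrightarrow>
    F q M (A @ L) S = of_cplx (eps' p L) * F q M (A @ sort L) S"
proof (induction L arbitrary: A)
  case Nil
  then show ?case by (simp add: eps'_def of_cplx_one)
next
  case (Cons x L)
  have "F q M (A @ x # L) S = F q M ((A @ [x]) @ L) S" by simp
  also have "\<dots> = of_cplx (eps' p L) * F q M ((A @ [x]) @ sort L) S"
    by (rule Cons.IH) (use Cons.prems in auto)
  also have "F q M ((A @ [x]) @ sort L) S = F q M (A @ x # sort L) S" by simp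
  also have "\<dots> = of_cplx (cross p {x} (set (sort L))) * F q M (A @ insort x (sort L)) S"
    by (rule F_insort[OF Mn pp S]) (use Cons.prems in \<open>auto simp: strict_sorted_iff\<close>)
  finally have e: "F q M (A @ x # L) S = of_cplx (eps' p L) * (of_cplx (cross p {x} (set L)) * F q M (A @ insort x (sort L)) S)"
    by simp
  have e2: "eps' p (x # L) = cross p {x} (set L) * eps' p L"
    using Cons.prems(1) by (rule eps'_Cons)
  show ?case unfolding e e2 sort_key_simps
    by (simp only: of_cplx_mult mult.assoc mult.commute[of "cross p {x} (set L)"])
qed

lemma compl_props:
  shows "set (compl_idx n J) = {1..n} - set J" "distinct (compl_idx n J)" "sorted_wrt (<) (compl_idx n J)"
proof -
  show "set (compl_idx n J) = {1..n} - set J" unfolding compl_idx_def by auto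
  show "distinct (compl_idx n J)" unfolding compl_idx_def by simp
  show "sorted_wrt (<) (compl_idx n J)" unfolding compl_idx_def by (rule sorted_wrt_filter) (rule sorted_wrt_upt)
qed

lemma scal3:
  "of_cplx c * (of_cplx e1 * (T1::'a::complex_algebra_1)) * (of_cplx e2 * T2) = of_cplx (e1 * e2 * c) * (T1 * T2)"
proof -
  have "of_cplx c * (of_cplx e1 * T1) * (of_cplx e2 * T2) = of_cplx c * (of_cplx e1 * (T1 * (of_cplx e2 * T2)))"
    by (simp only: mult.assoc)
  also have "T1 * (of_cplx e2 * T2) = of_cplx e2 * (T1 * T2)" by (rule of_cplx_lc)
  finally have 1: "of_cplx c * (of_cplx e1 * T1) * (of_cplx e2 * T2) = of_cplx c * (of_cplx e1 * (of_cplx e2 * (T1 * T2)))"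
    by simp
  have 2: "of_cplx c * (of_cplx e1 * (of_cplx e2 * (T1 * T2))) = of_cplx (c * (e1 * e2)) * (T1 * T2)"
    by (simp only: of_cplx_mult mult.assoc)
  have 3: "c * (e1 * e2) = e1 * e2 * c" by (simp add: mult_ac)
  show ?thesis unfolding 1 2 3 ..
qed

lemma dist2: "(c::'a::ring_1) * sum f A * sum g B = (\<Sum>x\<in>A. \<Sum>y\<in>B. c * f x * g y)"
proof -
  have "c * sum f A * sum g B = (\<Sum>x\<in>A. c * f x) * sum g B" by (simp only: sum_distrib_left)
  also have "\<dots> = (\<Sum>x\<in>A. c * f x * sum g B)" by (rule sum_distrib_right)
  also have "\<dots> = (\<Sum>x\<in>A. \<Sum>y\<in>B. c * f x * g y)" by (simp only: sum_distrib_left)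
  finally show ?thesis .
qed

lemma F_split:
  fixes M :: "nat \<Rightarrow> nat \<Rightarrow> 'a::complex_algebra_1"
  assumes rn: "r \<le> n" and l1: "length L1 = r" and l2: "length L2 = n - r"
  shows "F q M (L1 @ L2) {1..n} = (\<Sum>J\<in>incr_idx n r. of_cplx (eps q (J @ compl_idx n J)) *
            F q M L1 (set J) * F q M L2 (set (compl_idx n J)))"
proof -
  let ?Jc = "compl_idx n"
  let ?Sig = "Sigma (incr_idx n r) (\<lambda>J. permutations_of_set (set J) \<times> permutations_of_set (set (?Jc J)))"
  let ?G = "\<lambda>L R. of_cplx (eps q R) * T M R L"
  let ?h = "\<lambda>(J, R1, R2). of_cplx (eps q (J @ ?Jc J)) * ?G L1 R1 * ?G L2 R2"
  let ?j = "\<lambda>(J::nat list, R1::nat list, R2::nat list). R1 @ R2"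
  let ?i = "\<lambda>R::nat list. (sort (take r R), take r R, drop r R)"
  have finJ: "finite (incr_idx n r)"
  proof (rule finite_subset)
    show "incr_idx n r \<subseteq> {xs. set xs \<subseteq> {1..n} \<and> length xs = r}" unfolding incr_idx_def by auto
    show "finite {xs. set xs \<subseteq> {1..n} \<and> length xs = r}" by (rule finite_lists_length_eq) simp
  qed
  have memSig: "J \<in> incr_idx n r \<and> distinct R1 \<and> set R1 = set J \<and> distinct R2 \<and> set R2 = {1..n} - set J
      \<and> sorted_wrt (<) J \<and> length J = r \<and> set J \<subseteq> {1..n} \<and> length R1 = r \<and> length R2 = n - r"
    if a: "(J, R1, R2) \<in> ?Sig" for J R1 R2
  proof -
    have J: "sorted_wrt (<) J" "set J \<subseteq> {1..n}" "length J = r" using a by (auto simp: incr_idx_def)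
    have dJ: "distinct J" using J(1) by (simp add: strict_sorted_iff)
    have R: "distinct R1" "set R1 = set J" "distinct R2" "set R2 = {1..n} - set J"
      using a by (auto dest: permutations_of_setD simp: compl_props)
    have "length R1 = r" using R(1,2) J(3) dJ by (metis distinct_card)
    moreover have "length R2 = n - r"
    proof -
      have "card ({1..n} - set J) = n - r" using J dJ by (simp add: card_Diff_subset distinct_card)
      then show ?thesis using R(3,4) by (metis distinct_card)
    qed
    ultimately show ?thesis using a J R by auto
  qed
  have "F q M (L1 @ L2) {1..n} = (\<Sum>a\<in>?Sig. ?G (L1 @ L2) (?j a))"
    unfolding F_def
  proof (rule sum.reindex_bij_witness[of _ ?i ?j, symmetric])
    fix a assume a: "a \<in> ?Sig"
    obtain J R1 R2 where aa: "a = (J, R1, R2)" by (cases a) auto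
    note m = memSig[OF a[unfolded aa]]
    have dd: "distinct (R1 @ R2)" using m by auto
    have st: "set (R1 @ R2) = {1..n}" using m by auto
    show "?j a \<in> permutations_of_set {1..n}" using dd st by (auto simp: aa)
    have "sort R1 = J"
      using m by (intro sorted_distinct_set_unique) (auto simp: strict_sorted_iff)
    then show "?i (?j a) = a" using m by (simp add: aa)
  next
    fix R assume R: "R \<in> permutations_of_set {1..n}"
    have dR: "distinct R" and sR: "set R = {1..n}" using R by (auto dest: permutations_of_setD)
    have lR: "length R = n" using dR sR by (metis card_atLeastAtMost diff_Suc_1 distinct_card)
    show "?j (?i R) = R" by simp
    let ?J = "sort (take r R)"
    have dt: "distinct (take r R)" "distinct (drop r R)" using dR by auto
    have sJ: "set ?J = set (take r R)" by simp
    have Jinc: "?J \<in> incr_idx n r"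
    proof -
      have "sorted_wrt (<) ?J" using dt by (simp add: strict_sorted_iff)
      moreover have "set ?J \<subseteq> {1..n}" using sR set_take_subset[of r R] by simp
      moreover have "length ?J = r" using lR rn by simp
      ultimately show ?thesis unfolding incr_idx_def by blast
    qed
    have "set (drop r R) = {1..n} - set (take r R)"
    proof -
      have u: "set (take r R) \<union> set (drop r R) = {1..n}" using sR by (metis append_take_drop_id set_append)
      have i: "set (take r R) \<inter> set (drop r R) = {}" using dR by (metis append_take_drop_id distinct_append)
      show ?thesis using u i by blast
    qed
    then have "drop r R \<in> permutations_of_set (set (?Jc ?J))"
      using dt by (auto simp: compl_props)
    moreover have "take r R \<in> permutations_of_set (set ?J)" using dt by auto
    ultimately show "?i R \<in> ?Sig" using Jinc by auto
  qed (rule refl)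
  also have "\<dots> = (\<Sum>a\<in>?Sig. ?h a)"
  proof (rule sum.cong[OF refl])
    fix a assume a: "a \<in> ?Sig"
    obtain J R1 R2 where aa: "a = (J, R1, R2)" by (cases a) auto
    note m = memSig[OF a[unfolded aa]]
    have dJ: "distinct (J @ ?Jc J)" using m compl_props[of n J] by (auto simp: strict_sorted_iff)
    have dR: "distinct (R1 @ R2)" using m by auto
    have e1: "eps q (J @ ?Jc J) = cross q (set J) (set (?Jc J))"
      using dJ m compl_props[of n J] by (simp add: eps_eq_eps' eps'_append eps'_sorted)
    have e2: "eps q (R1 @ R2) = eps q R1 * eps q R2 * cross q (set J) (set (?Jc J))"
      using dR m compl_props[of n J] by (simp add: eps_eq_eps' eps'_append)
    have t: "T M (R1 @ R2) (L1 @ L2) = T M R1 L1 * T M R2 L2"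
      using m l1 by (simp add: T_append)
    show "?G (L1 @ L2) (?j a) = ?h a"
      unfolding aa by (simp only: prod.case e1 e2 t scal3)
  qed
  also have "\<dots> = (\<Sum>J\<in>incr_idx n r. \<Sum>R1\<in>permutations_of_set (set J). \<Sum>R2\<in>permutations_of_set (set (?Jc J)). ?h (J, R1, R2))"
  proof -
    have "(\<Sum>a\<in>?Sig. ?h a) = (\<Sum>J\<in>incr_idx n r. \<Sum>p\<in>permutations_of_set (set J) \<times> permutations_of_set (set (?Jc J)). ?h (J, p))"
      using sum.Sigma[OF finJ, of "\<lambda>J. permutations_of_set (set J) \<times> permutations_of_set (set (?Jc J))" "\<lambda>J p. ?h (J, p)"]
      by (simp add: split_def)
    also have "\<dots> = (\<Sum>J\<in>incr_idx n r. \<Sum>R1\<in>permutations_of_set (set J). \<Sum>R2\<in>permutations_of_set (set (?Jc J)). ?h (J, R1, R2))"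
      by (rule sum.cong[OF refl]) (simp add: sum.cartesian_product split_def)
    finally show ?thesis .
  qed
  also have "\<dots> = (\<Sum>J\<in>incr_idx n r. of_cplx (eps q (J @ compl_idx n J)) *
            F q M L1 (set J) * F q M L2 (set (compl_idx n J)))"
    by (rule sum.cong[OF refl]) (simp only: F_def dist2 prod.case)
  finally show ?thesis .
qed

theorem mainTheorem2:
  fixes n r :: nat
    and q p :: "nat \<Rightarrow> nat \<Rightarrow> complex"
    and M :: "nat \<Rightarrow> nat \<Rightarrow> 'a::complex_algebra_1"
    and I K :: "nat list"
  assumes "param_matrix n q" and "param_matrix n p"
    and "manin n n q p M"
    and "r \<le> n"
    and "length I = r" and "distinct I" and "set I \<subseteq> {1..n}"
    and "length K = n - r" and "distinct K" and "set K \<subseteq> {1..n}"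
  shows "of_cplx (eps p (I @ K)) * cdet n q M =
    (\<Sum>J\<in>incr_idx n r. of_cplx (eps q (J @ compl_idx n J)) *
        cdet_sub q J I M * cdet_sub q (compl_idx n J) K M)"
proof -
  note Mn = assms(3) and pp = assms(2)
  have S: "{1..n} \<subseteq> {1..n}" by simp
  have lIK: "length (I @ K) = card {1..n}" using assms(4,5,8) by simp
  have sIK: "set (I @ K) \<subseteq> {1..n}" using assms(7,10) by simp
  have rhs: "(\<Sum>J\<in>incr_idx n r. of_cplx (eps q (J @ compl_idx n J)) *
        cdet_sub q J I M * cdet_sub q (compl_idx n J) K M) = F q M (I @ K) {1..n}"
  proof -
    have "(\<Sum>J\<in>incr_idx n r. of_cplx (eps q (J @ compl_idx n J)) *
        cdet_sub q J I M * cdet_sub q (compl_idx n J) K M) =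
        (\<Sum>J\<in>incr_idx n r. of_cplx (eps q (J @ compl_idx n J)) *
        F q M I (set J) * F q M K (set (compl_idx n J)))"
    proof (rule sum.cong[OF refl])
      fix J assume J: "J \<in> incr_idx n r"
      then have sJ: "sorted_wrt (<) J" "length J = r" "set J \<subseteq> {1..n}" by (auto simp: incr_idx_def)
      have dJ: "distinct J" using sJ(1) by (simp add: strict_sorted_iff)
      have "length (compl_idx n J) = card (set (compl_idx n J))"
        using compl_props(2) by (simp add: distinct_card)
      also have "\<dots> = n - r" using sJ dJ by (simp add: compl_props(1) card_Diff_subset distinct_card)
      finally have lc: "length (compl_idx n J) = n - r" .
      have c1: "cdet_sub q J I M = F q M I (set J)"
        by (rule cdet_sub_eq) (use sJ assms(5) in auto)
      have c2: "cdet_sub q (compl_idx n J) K M = F q M K (set (compl_idx n J))"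
        by (rule cdet_sub_eq) (use compl_props(3) lc assms(8) in auto)
      show "of_cplx (eps q (J @ compl_idx n J)) * cdet_sub q J I M * cdet_sub q (compl_idx n J) K M =
          of_cplx (eps q (J @ compl_idx n J)) * F q M I (set J) * F q M K (set (compl_idx n J))"
        by (simp only: c1 c2)
    qed
    also have "\<dots> = F q M (I @ K) {1..n}"
      by (rule F_split[symmetric]) (use assms(4,5,8) in auto)
    finally show ?thesis .
  qed
  have cd: "cdet n q M = F q M [1..<n+1] {1..n}"
  proof -
    have "cdet_sub q [1..<n+1] [1..<n+1] M = F q M [1..<n+1] (set [1..<n+1])"
      by (rule cdet_sub_eq) (rule sorted_wrt_upt, rule refl)
    moreover have "set [1..<n+1] = {1..n}" by (simp add: atLeastLessThanSuc_atLeastAtMost del: upt_Suc)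
    ultimately show ?thesis unfolding cdet_def by simp
  qed
  show ?thesis
  proof (cases "distinct (I @ K)")
    case True
    have sIK2: "set (I @ K) = {1..n}"
    proof -
      have "card (set (I @ K)) = card {1..n}" using distinct_card[OF True] lIK by (simp only:)
      then show ?thesis using card_subset_eq[OF _ sIK] by simp
    qed
    have srt: "sort (I @ K) = [1..<n+1]"
    proof (rule sorted_distinct_set_unique)
      show "sorted (sort (I @ K))" "distinct (sort (I @ K))" using True by simp_all
      show "sorted [1..<n+1]" "distinct [1..<n+1]" by (simp_all del: upt_Suc)
      show "set (sort (I @ K)) = set [1..<n+1]" using sIK2
        by (simp add: atLeastLessThanSuc_atLeastAtMost del: upt_Suc)
    qed
    have "F q M ([] @ (I @ K)) {1..n} = of_cplx (eps' p (I @ K)) * F q M ([] @ sort (I @ K)) {1..n}"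
      by (rule F_sort[OF Mn pp S]) (use True sIK lIK in auto)
    then have "F q M (I @ K) {1..n} = of_cplx (eps p (I @ K)) * cdet n q M"
      using True by (simp add: srt cd eps_eq_eps')
    then show ?thesis using rhs by simp
  next
    case False
    have "F q M (I @ K) {1..n} = 0" by (rule F_dup[OF Mn pp S False sIK lIK])
    moreover have "eps p (I @ K) = 0" by (simp only: eps_def if_not_P[OF False])
    ultimately show ?thesis using rhs by (simp add: of_cplx_0)
  qed
qed

end
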